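(* Let $H$, $G$, the Coxeter generators $s_1,\dots,s_6,s_{3'}$ and the cosets $\pm v(i,j)\in G\backslash H$ be as in the context, with $H$ acting on $G\backslash H$ by right multiplication. (a) For $0\le k\le 5$ let $\rho_k$ denote the transposition $(k+1,k+2)$ of $\{0,1,\dots,7\}$. Then for all $0\le i<j\le 7$ and either choice of sign, $s_{6-k}(\pm v(i,j))=\pm v(\rho_k(i),\rho_k(j))$ (same sign on both sides). (b) Let $K_0=\{0,1,2,3\}$ and $K_1=\{4,5,6,7\}$. Then for $0\le i<j\le 7$, $$s_{3'}(\pm v(i,j))=\begin{cases}\mp v(k,l) & \text{if } \{i,j,k,l\}=K_p \text{ for some } p\in\{0,1\},\\ \pm v(i,j) & \text{otherwise.}\end{cases}$$
   Context: Let $W=\{(a,b,c,d,e,f,g,h)^T\in\mathbb{C}^8: 2+3a=b+c+d+e+f+g+h\}$. A transposition $(ij)\in S_8$ is identified with the $8\times8$ permutation matrix swapping the $i$th and $j$th coordinates. Let $X\in GL(8,\mathbb{C})$ be the matrix whose rows are $(\tfrac12,\tfrac12,-\tfrac12,-\tfrac12,-\tfrac12,\tfrac12,\tfrac12,\tfrac12)$, $e_2$, $(-\tfrac12,\tfrac12,\tfrac12,-\tfrac12,-\tfrac12,\tfrac12,\tfrac12,\tfrac12)$, $(-\tfrac12,\tfrac12,-\tfrac12,\tfrac12,-\tfrac12,\tfrac12,\tfrac12,\tfrac12)$, $(-\tfrac12,\tfrac12,-\tfrac12,-\tfrac12,\tfrac12,\tfrac12,\tfrac12,\tfrac12)$,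 $e_6,e_7,e_8$ (so for $\vec w\in W$, $X\vec w=(1+2a-c-d-e,b,1+a-d-e,1+a-c-e,1+a-c-d,f,g,h)^T$), and let $Y$ be the matrix with rows $(-1,2,0,0,0,0,0,0)$, $(-1,1,1,0,0,0,0,0)$, $(0,1,0,0,0,0,0,0)$, and, for $r=4,\dots,8$, the row $-e_1+e_2+e_r$ (so $Y\vec w=(2b-a,b+c-a,b,b+d-a,b+e-a,b+f-a,b+g-a,b+h-a)^T$). Let $H=\langle(23),(34),(45),(56),(67),(78),X,Y\rangle\subset GL(8,\mathbb{C})$; $H\cong W(E_7)$ with Coxeter generators $s_1=Y(23)$, $s_2=(34)$, $s_3=(45)$, $s_4=(56)$, $s_5=(67)$, $s_6=(78)$, $s_{3'}=X$. Let $G=\langle s_2,s_3,s_4,s_5,s_6,s_{3'}\rangle$ ($\cong W(E_6)$, index 56 in $H$). For $\vec w\in W$ put $x_0=b,x_1=h,x_2=g,x_3=f,x_4=e,x_5=d,x_6=c,x_7=a$. For $\alpha,\beta\in H$, the second entries of $\alpha\vec w$ and $\beta\vec w$ (as affine functions of $\vec w\in W$) agree iff $G\alpha=G\beta$, and each such second entry is $x_i+x_j-x_7$ or $1+x_7-x_i-x_j$ for some $0\le i<j\le 7$. Write $v(i,j)$ for the right coset of $G$ whose elements $\alpha$ give second entry $x_i+x_j-x_7$, and $-v(i,j)$ for the coset giving $1+x_7-x_i-x_j$; these are the 56 cosets, and $\pm v(j,i)$ means $\pm v(i,j)$. For an involution $s\in H$ and a coset $G\beta$, $s(G\beta):=G\beta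 s$. *)

theory Defs
  imports "HOL-Analysis.Analysis"
begin

text \<open>Coordinates 1..8 of complex 8-vectors / 8x8 matrices (index type 8 = {0..7}).\<close>

type_synonym vec8 = "complex ^ 8"
type_synonym mat8 = "complex ^ 8 ^ 8"

definition idx :: "8 \<Rightarrow> nat" where
  "idx r = nat (Rep_bit0 r) + 1"

definition cidx :: "nat \<Rightarrow> 8" where
  "cidx k = Abs_bit0 (int k - 1)"

definition ent :: "vec8 \<Rightarrow> nat \<Rightarrow> complex" where
  "ent w k = w $ cidx k"

definition mk :: "(nat \<Rightarrow> nat \<Rightarrow> complex) \<Rightarrow> mat8" where
  "mk f = (\<chi> r s. f (idx r) (idx s))"

definition Wset :: "vec8 set" where
  "Wset = {w. 2 + 3 * ent w 1 = ent w 2 + ent w 3 + ent w 4 + ent w 5 + ent w 6 + ent w 7 + ent w 8}"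

definition tr :: "nat \<Rightarrow> nat \<Rightarrow> mat8" where
  "tr i j = mk (\<lambda>r s. if s = (if r = i then j else if r = j then i else r) then 1 else 0)"

definition Xm :: mat8 where
  "Xm = mk (\<lambda>r s.
     if r = 1 then (if s \<in> {3,4,5} then -1/2 else 1/2)
     else if r = 3 then (if s \<in> {1,4,5} then -1/2 else 1/2)
     else if r = 4 then (if s \<in> {1,3,5} then -1/2 else 1/2)
     else if r = 5 then (if s \<in> {1,3,4} then -1/2 else 1/2)
     else (if s = r then 1 else 0))"

definition Ym :: mat8 where
  "Ym = mk (\<lambda>r s.
     if r = 1 then (if s = 1 then -1 else if s = 2 then 2 else 0)
     else if r = 2 then (if s = 1 then -1 else if s = 2 then 1 else if s = 3 then 1 else 0)
     else if r = 3 then (if s = 2 then 1 else 0)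
     else (if s = 1 then -1 else if s = 2 then 1 else if s = r then 1 else 0))"

inductive_set gen_grp :: "mat8 set \<Rightarrow> mat8 set" for S where
  one: "mat 1 \<in> gen_grp S"
| mul: "a \<in> gen_grp S \<Longrightarrow> s \<in> S \<Longrightarrow> a ** s \<in> gen_grp S"
| mulinv: "a \<in> gen_grp S \<Longrightarrow> s \<in> S \<Longrightarrow> a ** matrix_inv s \<in> gen_grp S"

definition Hgrp :: "mat8 set" where
  "Hgrp = gen_grp {tr 2 3, tr 3 4, tr 4 5, tr 5 6, tr 6 7, tr 7 8, Xm, Ym}"

definition sgen :: "nat \<Rightarrow> mat8" where
  "sgen k = (if k = 1 then Ym ** tr 2 3 else tr (k+1) (k+2))"

definition s3' :: mat8 where "s3' = Xm"

definition Ggrp :: "mat8 set" where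
  "Ggrp = gen_grp {sgen 2, sgen 3, sgen 4, sgen 5, sgen 6, s3'}"

text \<open>x_0 = b, x_1 = h, x_2 = g, x_3 = f, x_4 = e, x_5 = d, x_6 = c, x_7 = a\<close>
definition xc :: "nat \<Rightarrow> vec8 \<Rightarrow> complex" where
  "xc i w = ent w (if i = 0 then 2 else if i = 7 then 1 else 9 - i)"

text \<open>The coset +v(i,j) (sign True) resp. -v(i,j) (sign False): all elements of H
  whose second entry of alpha w, as a function of w in W, is x_i+x_j-x_7 resp. 1+x_7-x_i-x_j.\<close>
definition vc :: "bool \<Rightarrow> nat \<Rightarrow> nat \<Rightarrow> mat8 set" where
  "vc sg i j = {\<alpha> \<in> Hgrp. \<forall>w \<in> Wset.
      ent (\<alpha> *v w) 2 = (if sg then xc i w + xc j w - xc 7 w else 1 + xc 7 w - xc i w - xc j w)}"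

text \<open>action of an involution s on a coset: s(G beta) = G beta s\<close>
definition act :: "mat8 \<Rightarrow> mat8 set \<Rightarrow> mat8 set" where
  "act s C = (\<lambda>\<alpha>. \<alpha> ** s) ` C"

definition rho :: "nat \<Rightarrow> nat \<Rightarrow> nat" where
  "rho k i = (if i = k + 1 then k + 2 else if i = k + 2 then k + 1 else i)"

definition Kset :: "nat \<Rightarrow> nat set" where
  "Kset p = (if p = 0 then {0,1,2,3} else {4,5,6,7})"

end

theory Submission imports Defs begin

lemma Rep8: "Rep_bit0 (r::8) \<in> {0..<8}"
  using Rep_bit0[of r] by simp

lemma idx_range: "idx r \<in> {1..8}"
  using Rep8[of r] unfolding idx_def by auto

lemma idx_cidx: "k \<in> {1..8} \<Longrightarrow> idx (cidx k) = k"
  unfolding idx_def cidx_def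
  by (subst Abs_bit0_inverse) auto

lemma cidx_idx: "cidx (idx r) = r"
  using Rep8[of r] unfolding idx_def cidx_def
  by (simp add: Rep_bit0_inverse)

lemma inj_idx: "inj idx"
  by (metis cidx_idx injI)

lemma idx_UNIV: "idx ` UNIV = {1..8}"
proof
  show "idx ` UNIV \<subseteq> {1..8}" using idx_range by auto
  show "{1..8} \<subseteq> idx ` UNIV"
  proof
    fix x :: nat assume "x \<in> {1..8}"
    then have "x = idx (cidx x)" using idx_cidx by simp
    then show "x \<in> idx ` UNIV" by blast
  qed
qed

lemma ent_mk: assumes "r \<in> {1..8}"
  shows "ent (mk f *v w) r = (\<Sum>s\<in>{1..8}. f r s * ent w s)"
proof -
  have "ent (mk f *v w) r = (\<Sum>j\<in>UNIV. f r (idx j) * w $ j)"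
    unfolding ent_def mk_def matrix_vector_mult_def using idx_cidx[OF assms] by simp
  also have "\<dots> = (\<Sum>j\<in>UNIV. f r (idx j) * ent w (idx j))"
    by (simp add: ent_def cidx_idx)
  also have "\<dots> = (\<Sum>s\<in>idx ` UNIV. f r s * ent w s)"
    by (subst sum.reindex[OF inj_idx]) simp
  finally show ?thesis by (simp add: idx_UNIV)
qed

lemma sum18: "(\<Sum>s\<in>{1..8::nat}. g s) = g 1 + g 2 + g 3 + g 4 + g 5 + g 6 + g 7 + g 8"
  by (simp add: numeral_eq_Suc add.assoc)

lemma vec_ent_eq: assumes "\<And>r. r \<in> {1..8} \<Longrightarrow> ent v r = ent u r" shows "v = u"
unfolding vec_eq_iff proof
  fix j :: 8
  have "ent v (idx j) = ent u (idx j)" using assms idx_range by blast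
  then show "v $ j = u $ j" by (simp add: ent_def cidx_idx)
qed

lemma mat_eq_ent: assumes "\<And>w r. r \<in> {1..8} \<Longrightarrow> ent (A *v w) r = ent (B *v w) r"
  shows "A = (B::mat8)"
  using assms vec_ent_eq matrix_eq by metis

lemma if01_mult: "(if P then 1 else 0) * (x::complex) = (if P then x else 0)" by simp

lemma ent_tr: assumes "r \<in> {1..8}" "a \<in> {1..8}" "b \<in> {1..8}"
  shows "ent (tr a b *v w) r = ent w (if r = a then b else if r = b then a else r)"
  using assms unfolding tr_def by (simp add: ent_mk if01_mult sum.delta)

definition fv :: "bool \<Rightarrow> nat \<Rightarrow> nat \<Rightarrow> vec8 \<Rightarrow> complex" where
  "fv sg i j w = (if sg then xc i w + xc j w - xc 7 w else 1 + xc 7 w - xc i w - xc j w)"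

definition good :: "mat8 \<Rightarrow> bool" where
  "good s \<longleftrightarrow> (\<forall>\<alpha>\<in>Hgrp. \<alpha> ** s \<in> Hgrp) \<and> s ** s = mat 1 \<and> (\<forall>w\<in>Wset. s *v w \<in> Wset)"

lemma act_vc:
  assumes g: "good s" and E: "\<And>w. w \<in> Wset \<Longrightarrow> fv sg i j (s *v w) = fv sg' i' j' w"
  shows "act s (vc sg i j) = vc sg' i' j'"
proof -
  have H: "\<And>\<alpha>. \<alpha> \<in> Hgrp \<Longrightarrow> \<alpha> ** s \<in> Hgrp" and inv: "s ** s = mat 1"
    and W: "\<And>w. w \<in> Wset \<Longrightarrow> s *v w \<in> Wset" using g unfolding good_def by auto
  have E2: "fv sg i j w = fv sg' i' j' (s *v w)" if "w \<in> Wset" for w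
  proof -
    have "fv sg i j w = fv sg i j (s *v (s *v w))"
      by (simp add: matrix_vector_mul_assoc inv)
    also have "\<dots> = fv sg' i' j' (s *v w)" using E W that by blast
    finally show ?thesis .
  qed
  have vcf: "vc sg i j = {\<alpha> \<in> Hgrp. \<forall>w \<in> Wset. ent (\<alpha> *v w) 2 = fv sg i j w}" for sg i j
    unfolding vc_def fv_def by simp
  show ?thesis
  proof
    show "act s (vc sg i j) \<subseteq> vc sg' i' j'"
    proof
      fix \<beta> assume "\<beta> \<in> act s (vc sg i j)"
      then obtain \<alpha> where b: "\<beta> = \<alpha> ** s" and a: "\<alpha> \<in> vc sg i j" unfolding act_def by auto
      have "\<forall>w\<in>Wset. ent (\<beta> *v w) 2 = fv sg' i' j' w"
      proof
        fix w assume "w \<in> Wset"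
        have "ent (\<beta> *v w) 2 = ent (\<alpha> *v (s *v w)) 2" by (simp add: b matrix_vector_mul_assoc)
        also have "\<dots> = fv sg i j (s *v w)" using a W[OF \<open>w \<in> Wset\<close>] unfolding vcf by blast
        also have "\<dots> = fv sg' i' j' w" using E \<open>w \<in> Wset\<close> by blast
        finally show "ent (\<beta> *v w) 2 = fv sg' i' j' w" .
      qed
      moreover have "\<beta> \<in> Hgrp" using a H b unfolding vcf by blast
      ultimately show "\<beta> \<in> vc sg' i' j'" unfolding vcf by blast
    qed
    show "vc sg' i' j' \<subseteq> act s (vc sg i j)"
    proof
      fix \<beta> assume bv: "\<beta> \<in> vc sg' i' j'"
      define \<alpha> where "\<alpha> = \<beta> ** s"
      have b: "\<beta> = \<alpha> ** s" by (simp add: \<alpha>_def matrix_mul_assoc[symmetric] inv)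
      have "\<forall>w\<in>Wset. ent (\<alpha> *v w) 2 = fv sg i j w"
      proof
        fix w assume "w \<in> Wset"
        have "ent (\<alpha> *v w) 2 = ent (\<beta> *v (s *v w)) 2" by (simp add: \<alpha>_def matrix_vector_mul_assoc)
        also have "\<dots> = fv sg' i' j' (s *v w)" using bv W[OF \<open>w \<in> Wset\<close>] unfolding vcf by blast
        also have "\<dots> = fv sg i j w" using E2 \<open>w \<in> Wset\<close> by simp
        finally show "ent (\<alpha> *v w) 2 = fv sg i j w" .
      qed
      moreover have "\<alpha> \<in> Hgrp" using bv H unfolding vcf \<alpha>_def by blast
      ultimately have "\<alpha> \<in> vc sg i j" unfolding vcf by blast
      then show "\<beta> \<in> act s (vc sg i j)" unfolding act_def b by blast
    qed
  qed
qed

lemma Hgen: "s \<in> {tr 2 3, tr 3 4, tr 4 5, tr 5 6, tr 6 7, tr 7 8, Xm, Ym} \<Longrightarrow> \<alpha> \<in> Hgrp \<Longrightarrow> \<alpha> ** s \<in> Hgrp"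
  unfolding Hgrp_def by (rule gen_grp.mul)

lemma Wset_ent: "w \<in> Wset \<longleftrightarrow> 2 + 3 * ent w 1 = ent w 2 + ent w 3 + ent w 4 + ent w 5 + ent w 6 + ent w 7 + ent w 8"
  unfolding Wset_def by simp

lemma good_tr: assumes "k \<in> {2..6}" shows "good (tr (k+1) (k+2))"
proof -
  have kc: "k = 2 \<or> k = 3 \<or> k = 4 \<or> k = 5 \<or> k = 6" using assms by auto
  have "tr (k+1) (k+2) \<in> {tr 2 3, tr 3 4, tr 4 5, tr 5 6, tr 6 7, tr 7 8, Xm, Ym}"
  proof -
    have "k = 2 \<or> k = 3 \<or> k = 4 \<or> k = 5 \<or> k = 6" using assms by auto
    then show ?thesis by auto
  qed
  then have "\<forall>\<alpha>\<in>Hgrp. \<alpha> ** tr (k+1) (k+2) \<in> Hgrp" using Hgen by blast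
  moreover have "tr (k+1) (k+2) ** tr (k+1) (k+2) = mat 1"
    by (rule mat_eq_ent) (use assms in \<open>auto simp: ent_tr matrix_vector_mul_assoc[symmetric]\<close>)
  moreover have "\<forall>w\<in>Wset. tr (k+1) (k+2) *v w \<in> Wset"
    using kc by (elim disjE) (auto simp: Wset_ent ent_tr algebra_simps numeral_eq_Suc)
  ultimately show ?thesis unfolding good_def by blast
qed

lemma ent_mk8: "r \<in> {1..8} \<Longrightarrow> ent (mk f *v w) r = f r 1 * ent w 1 + f r 2 * ent w 2 + f r 3 * ent w 3
  + f r 4 * ent w 4 + f r 5 * ent w 5 + f r 6 * ent w 6 + f r 7 * ent w 7 + f r 8 * ent w 8"
  by (simp only: ent_mk sum18)

lemma S1_vec: "sgen 1 *v w = Ym *v (tr 2 3 *v w)"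
  by (simp add: sgen_def matrix_vector_mul_assoc)

lemma ent_S1: fixes w :: vec8
  defines "a \<equiv> ent w 1" and "b \<equiv> ent w 2" and "c \<equiv> ent w 3" and "d \<equiv> ent w 4"
    and "e \<equiv> ent w 5" and "f \<equiv> ent w 6" and "g \<equiv> ent w 7" and "h \<equiv> ent w 8"
  shows "ent (sgen 1 *v w) 1 = 2*c - a \<and> ent (sgen 1 *v w) 2 = b + c - a \<and> ent (sgen 1 *v w) 3 = c
    \<and> ent (sgen 1 *v w) 4 = c + d - a \<and> ent (sgen 1 *v w) 5 = c + e - a
    \<and> ent (sgen 1 *v w) 6 = c + f - a \<and> ent (sgen 1 *v w) 7 = c + g - a
    \<and> ent (sgen 1 *v w) 8 = c + h - a"
  unfolding S1_vec assms Ym_def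
  by (simp add: ent_mk8 ent_tr del: One_nat_def)

lemma ent_X: fixes w :: vec8
  defines "a \<equiv> ent w 1" and "b \<equiv> ent w 2" and "c \<equiv> ent w 3" and "d \<equiv> ent w 4"
    and "e \<equiv> ent w 5" and "f \<equiv> ent w 6" and "g \<equiv> ent w 7" and "h \<equiv> ent w 8"
  shows "ent (Xm *v w) 1 = (a+b-c-d-e+f+g+h)/2 \<and> ent (Xm *v w) 2 = b
    \<and> ent (Xm *v w) 3 = (-a+b+c-d-e+f+g+h)/2
    \<and> ent (Xm *v w) 4 = (-a+b-c+d-e+f+g+h)/2 \<and> ent (Xm *v w) 5 = (-a+b-c-d+e+f+g+h)/2
    \<and> ent (Xm *v w) 6 = f \<and> ent (Xm *v w) 7 = g
    \<and> ent (Xm *v w) 8 = h"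
  unfolding assms
  unfolding Xm_def by (simp add: ent_mk8 field_simps del: One_nat_def)

lemma r8: "r \<in> {1..8} \<Longrightarrow> r = 1 \<or> r = 2 \<or> r = 3 \<or> r = 4 \<or> r = 5 \<or> r = 6 \<or> r = 7 \<or> r = (8::nat)"
  by auto

lemma good_S1: "good (sgen 1)"
proof -
  have "\<forall>\<alpha>\<in>Hgrp. \<alpha> ** sgen 1 \<in> Hgrp"
  proof
    fix \<alpha> assume "\<alpha> \<in> Hgrp"
    then have "(\<alpha> ** Ym) ** tr 2 3 \<in> Hgrp" using Hgen by blast
    then show "\<alpha> ** sgen 1 \<in> Hgrp" by (simp add: sgen_def matrix_mul_assoc)
  qed
  moreover have "sgen 1 ** sgen 1 = mat 1"
  proof (rule mat_eq_ent)
    fix w r assume "r \<in> {1..(8::nat)}"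
    then show "ent ((sgen 1 ** sgen 1) *v w) r = ent (mat 1 *v w) r"
      using ent_S1[of "sgen 1 *v w"] ent_S1[of w]
      by (elim r8[elim_format] disjE) (simp_all add: matrix_vector_mul_assoc[symmetric] algebra_simps del: One_nat_def)
  qed
  moreover have "\<forall>w\<in>Wset. sgen 1 *v w \<in> Wset"
  proof
    fix w assume "w \<in> Wset"
    then show "sgen 1 *v w \<in> Wset" unfolding Wset_ent
      apply (simp only: ent_S1)
      by (simp add: algebra_simps del: One_nat_def)
  qed
  ultimately show ?thesis unfolding good_def by blast
qed

lemma good_X: "good Xm"
proof -
  have "\<forall>\<alpha>\<in>Hgrp. \<alpha> ** Xm \<in> Hgrp" using Hgen by blast
  moreover have "Xm ** Xm = mat 1"
  proof (rule mat_eq_ent)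
    fix w r assume "r \<in> {1..(8::nat)}"
    then show "ent ((Xm ** Xm) *v w) r = ent (mat 1 *v w) r"
      using ent_X[of "Xm *v w"] ent_X[of w]
      by (elim r8[elim_format] disjE) (simp_all add: matrix_vector_mul_assoc[symmetric] field_simps del: One_nat_def)
  qed
  moreover have "\<forall>w\<in>Wset. Xm *v w \<in> Wset"
  proof
    fix w assume "w \<in> Wset"
    then have b: "ent w 2 = 2 + 3 * ent w 1 - ent w 3 - ent w 4 - ent w 5 - ent w 6 - ent w 7 - ent w 8"
      unfolding Wset_ent by (simp add: algebra_simps)
    show "Xm *v w \<in> Wset" unfolding Wset_ent
      apply (simp only: ent_X b)
      by (simp add: field_simps del: One_nat_def)
  qed
  ultimately show ?thesis unfolding good_def by blast
qed

lemma nat8: "(n::nat) \<le> 7 \<Longrightarrow> n = 0 \<or> n = 1 \<or> n = 2 \<or> n = 3 \<or> n = 4 \<or> n = 5 \<or> n = 6 \<or> n = 7"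
  by auto

lemma xc_tr: assumes "k \<le> 4" "m \<le> 7"
  shows "xc m (sgen (6-k) *v w) = xc (rho k m) w"
  using nat8[OF assms(2)] assms(1)
  apply (elim disjE)
  by (auto simp: sgen_def ent_tr xc_def rho_def numeral_eq_Suc elim!: nat8[elim_format, of k])

lemma S1fv: assumes "i < j" "j \<le> 7"
  shows "fv sg i j (sgen 1 *v w) = fv sg (rho 5 i) (rho 5 j) w"
proof -
  have ij: "i \<le> 7" "j \<le> 7" using assms by auto
  show ?thesis
    using nat8[OF ij(1)] nat8[OF ij(2)] assms(1)
    apply (elim disjE)
    by (simp_all add: fv_def xc_def ent_S1 rho_def algebra_simps del: One_nat_def)
qed

lemma partA: assumes "k \<le> 5" "i < j" "j \<le> 7"
  shows "act (sgen (6 - k)) (vc sg i j) = vc sg (rho k i) (rho k j)"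
proof (cases "k \<le> 4")
  case True
  have "6 - k \<noteq> 1" using True by arith
  then have e: "sgen (6-k) = tr (6-k+1) (6-k+2)" by (simp add: sgen_def)
  have g: "good (sgen (6-k))"
    unfolding e by (rule good_tr) (use True in auto)
  show ?thesis
  proof (rule act_vc[OF g])
    fix w :: vec8
    have "rho k 7 = 7" using True by (simp add: rho_def)
    then show "fv sg i j (sgen (6 - k) *v w) = fv sg (rho k i) (rho k j) w"
      unfolding fv_def using xc_tr[OF True] assms by simp
  qed
next
  case False
  then have k: "k = 5" using assms by simp
  show ?thesis unfolding k
  proof (rule act_vc)
    show "good (sgen (6-5))" using good_S1 by simp
    fix w :: vec8
    show "fv sg i j (sgen (6 - 5) *v w) = fv sg (rho 5 i) (rho 5 j) w"
      using S1fv assms by simp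
  qed
qed

lemma good_s3': "good s3'" using good_X by (simp add: s3'_def)

lemma Wb: "w \<in> Wset \<Longrightarrow> ent w 2 = 2 + 3 * ent w 1 - ent w 3 - ent w 4 - ent w 5 - ent w 6 - ent w 7 - ent w 8"
  unfolding Wset_ent by (simp add: algebra_simps)

lemma X_cross: assumes "i < j" "j \<le> 7" "\<not> (\<exists>p\<in>{0,1}. i \<in> Kset p \<and> j \<in> Kset p)"
  shows "act s3' (vc sg i j) = vc sg i j"
proof (rule act_vc[OF good_s3'])
  fix w :: vec8 assume w: "w \<in> Wset"
  have ij: "i \<le> 7" "j \<le> 7" using assms by auto
  show "fv sg i j (s3' *v w) = fv sg i j w"
    using nat8[OF ij(1)] nat8[OF ij(2)] assms(1,3)
    apply (elim disjE)
    by (simp_all add: s3'_def Kset_def fv_def xc_def ent_X Wb[OF w] field_simps del: One_nat_def)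
qed

lemma X_in: assumes "p \<in> {0,1}" "{i,j,k,l} = Kset p" "i < j"
  shows "act s3' (vc sg i j) = vc (\<not> sg) k l"
proof (rule act_vc[OF good_s3'])
  fix w :: vec8 assume w: "w \<in> Wset"
  have c: "card {i,j,k,l} = 4" using assms(1,2) by (auto simp: Kset_def)
  have d: "distinct [i,j,k,l]" using c by (auto simp: card_insert_if split: if_splits)
  have m: "i \<in> Kset p" "j \<in> Kset p" "k \<in> Kset p" "l \<in> Kset p" using assms(2) by auto
  show "fv sg i j (s3' *v w) = fv (\<not> sg) k l w"
    using assms(1) m d assms(3)
    by (auto simp: s3'_def Kset_def fv_def xc_def ent_X Wb[OF w] field_simps simp del: One_nat_def)
qed

lemma exists_kl: assumes "p \<in> {0,1}" "i \<in> Kset p" "j \<in> Kset p" "i \<noteq> j"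
  shows "\<exists>k l. {i,j,k,l} = Kset p"
proof -
  have "card (Kset p) = 4" "finite (Kset p)" using assms(1) by (auto simp: Kset_def)
  then have "card (Kset p - {i,j}) = 2" using assms(2-4) by (simp add: card_Diff_subset)
  then obtain k l where "Kset p - {i,j} = {k,l}" by (meson card_2_iff)
  then have "{i,j,k,l} = Kset p" using assms(2,3) by blast
  then show ?thesis by blast
qed

theorem proposition3p3:
  shows "(\<forall>k \<le> 5. \<forall>i j sg. i < j \<and> j \<le> 7 \<longrightarrow>
            act (sgen (6 - k)) (vc sg i j) = vc sg (rho k i) (rho k j))
       \<and> (\<forall>i j sg. i < j \<and> j \<le> 7 \<longrightarrow>
            (\<forall>p k l. p \<in> {0, 1} \<and> {i, j, k, l} = Kset p \<longrightarrow>
               act s3' (vc sg i j) = vc (\<not> sg) k l)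
          \<and> (\<not> (\<exists>p k l. p \<in> {0, 1} \<and> {i, j, k, l} = Kset p) \<longrightarrow>
               act s3' (vc sg i j) = vc sg i j))"
proof (intro conjI allI impI)
  fix k i j sg assume "k \<le> (5::nat)" "i < j \<and> j \<le> (7::nat)"
  then show "act (sgen (6 - k)) (vc sg i j) = vc sg (rho k i) (rho k j)"
    using partA by blast
next
  fix i j :: nat and sg p k l
  assume "i < j \<and> j \<le> 7" "p \<in> {0, 1} \<and> {i, j, k, l} = Kset p"
  then show "act s3' (vc sg i j) = vc (\<not> sg) k l" using X_in by blast
next
  fix i j :: nat and sg
  assume a: "i < j \<and> j \<le> 7" and n: "\<not> (\<exists>p k l. p \<in> {0, 1} \<and> {i, j, k, l} = Kset p)"
  have "\<not> (\<exists>p\<in>{0,1}. i \<in> Kset p \<and> j \<in> Kset p)"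
    using n exists_kl a by (metis less_irrefl)
  then show "act s3' (vc sg i j) = vc sg i j" using X_cross a by blast
qed

end
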